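(* Let $\mathcal T=\boxtimes ABCD$ be a (nondegenerate) tetrahedron. The following are equivalent: (1) $\mathcal T$ has an obtuse path; (2) there exists a point $O\in\operatorname{int}\mathcal T$ such that $(\mathcal T,O)$ is monostable; (3) for every face $F$ of $\mathcal T$ there exists a point $O_F\in\operatorname{int}\mathcal T$ such that $(\mathcal T,O_F)$ is monostable with its unique stable equilibrium on $F$.
   Context: A weighted polyhedron is a pair $(\mathcal P,O)$ with $\mathcal P$ a convex polyhedron and $O\in\operatorname{int}\mathcal P$ (thought of as the center of mass; no other restriction on $O$). $(\mathcal P,O)$ is in equilibrium on a face, edge or vertex $X$ if there exists $Q$ in the relative interior of $X$ (a vertex is its own relative interior) such that the plane perpendicular to the segment $[O,Q]$ at $Q$ supports $\mathcal P$. The equilibrium is stable if $X$ is a face, unstable if $X$ is a vertex. $(\mathcal P,O)$ is monostable if it has exactly one stable equilibrium (exactly one face carries an equilibrium). A tetrahedron has an obtuse path if, for some labelling $A,B,C,D$ of its vertices, the three edges $\overline{AB},\overline{BC},\overline{CD}$ all have obtuse dihedral angles (i.e. three edges with obtuse dihedral angles having no common vertex). *)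

theory Defs
  imports "HOL-Analysis.Analysis"
begin

definition perp_plane_supports :: "(real^3) set \<Rightarrow> real^3 \<Rightarrow> real^3 \<Rightarrow> bool" where
  "perp_plane_supports P G Q \<longleftrightarrow> Q \<noteq> G \<and> Q \<in> P \<and> (\<forall>X\<in>P. (X - Q) \<bullet> (Q - G) \<le> 0)"

definition equilibrium_on :: "(real^3) set \<Rightarrow> real^3 \<Rightarrow> (real^3) set \<Rightarrow> bool" where
  "equilibrium_on P G X \<longleftrightarrow> (\<exists>Q \<in> rel_interior X. perp_plane_supports P G Q)"

definition facet3 :: "(real^3) set \<Rightarrow> (real^3) set \<Rightarrow> bool" where
  "facet3 F P \<longleftrightarrow> F face_of P \<and> aff_dim F = 2"

definition stable_equilibrium_on :: "(real^3) set \<Rightarrow> real^3 \<Rightarrow> (real^3) set \<Rightarrow> bool" where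
  "stable_equilibrium_on P G F \<longleftrightarrow> facet3 F P \<and> equilibrium_on P G F"

definition monostable :: "(real^3) set \<Rightarrow> real^3 \<Rightarrow> bool" where
  "monostable P G \<longleftrightarrow> (\<exists>!F. stable_equilibrium_on P G F)"

definition vec_angle :: "real^3 \<Rightarrow> real^3 \<Rightarrow> real" where
  "vec_angle u v = arccos ((u \<bullet> v) / (norm u * norm v))"

definition perp_comp :: "real^3 \<Rightarrow> real^3 \<Rightarrow> real^3" where
  "perp_comp d w = w - ((w \<bullet> d) / (d \<bullet> d)) *\<^sub>R d"

text \<open>Dihedral angle of the tetrahedron ABCD at the edge AB, i.e. the angle between the
  faces ABC and ABD along their common edge AB.\<close>
definition dihedral_angle :: "real^3 \<Rightarrow> real^3 \<Rightarrow> real^3 \<Rightarrow> real^3 \<Rightarrow> real" where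
  "dihedral_angle A B C D = vec_angle (perp_comp (B - A) (C - A)) (perp_comp (B - A) (D - A))"

text \<open>The tetrahedron ABCD has an obtuse path: for some relabelling a,b,c,d of its vertices,
  the edges ab, bc, cd all have obtuse dihedral angles.\<close>
definition has_obtuse_path :: "real^3 \<Rightarrow> real^3 \<Rightarrow> real^3 \<Rightarrow> real^3 \<Rightarrow> bool" where
  "has_obtuse_path A B C D \<longleftrightarrow>
     (\<exists>a b c d. {a, b, c, d} = {A, B, C, D} \<and> distinct [a, b, c, d] \<and>
        dihedral_angle a b c d > pi / 2 \<and>
        dihedral_angle b c a d > pi / 2 \<and>
        dihedral_angle c d a b > pi / 2)"

end

theory Submission
  imports Defs
begin


definition nv :: "real^3 \<Rightarrow> real^3 \<Rightarrow> real^3 \<Rightarrow> real^3" where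
  "nv Y Z V = perp_comp (Z - Y) (V - Y)"
definition cq :: "real^3 \<Rightarrow> real^3 \<Rightarrow> real^3 \<Rightarrow> real^3 \<Rightarrow> real" where
  "cq Y Z W X = nv Y Z W \<bullet> nv Y Z X"
definition aa :: "real^3 \<Rightarrow> real^3 \<Rightarrow> real^3 \<Rightarrow> real" where
  "aa Y Z V = nv Y Z V \<bullet> nv Y Z V"
definition gg :: "real^3 \<Rightarrow> real^3 \<Rightarrow> real^3 \<Rightarrow> real" where
  "gg Y Z X = ((Z-Y)\<bullet>(Z-Y)) * ((X-Y)\<bullet>(X-Y)) - ((Z-Y)\<bullet>(X-Y))^2"

lemma LI:
  assumes "distinct [P,X,Y,Z]" "\<not> affine_dependent {P,X,Y,Z}"
    and "\<alpha> *\<^sub>R (X - P) + \<beta> *\<^sub>R (Y - P) + \<gamma> *\<^sub>R (Z - P) = 0"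
  shows "\<alpha> = 0 \<and> \<beta> = 0 \<and> \<gamma> = 0"
proof (rule ccontr)
  assume H: "\<not> (\<alpha> = 0 \<and> \<beta> = 0 \<and> \<gamma> = 0)"
  have dd: "P \<noteq> X" "P \<noteq> Y" "P \<noteq> Z" "X \<noteq> Y" "X \<noteq> Z" "Y \<noteq> Z"
    "X \<noteq> P" "Y \<noteq> P" "Z \<noteq> P" "Y \<noteq> X" "Z \<noteq> X" "Z \<noteq> Y" using assms(1) by auto
  define U where "U = (\<lambda>v. if v = X then \<alpha> else if v = Y then \<beta> else if v = Z then \<gamma> else -(\<alpha>+\<beta>+\<gamma>))"
  have "sum U {P,X,Y,Z} = 0" using dd by (simp add: U_def)
  moreover have "\<exists>v\<in>{P,X,Y,Z}. U v \<noteq> 0" using H dd by (auto simp: U_def)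
  moreover have "(\<Sum>v\<in>{P,X,Y,Z}. U v *\<^sub>R v) = 0"
    using dd assms(3) by (simp add: U_def algebra_simps)
  ultimately have "affine_dependent {P,X,Y,Z}"
    using affine_dependent_explicit_finite[of "{P,X,Y,Z}"] by blast
  with assms(2) show False by blast
qed

lemma perp_neg: "perp_comp (-d) w = perp_comp d w"
  unfolding perp_comp_def by simp

lemma perp_shift: "perp_comp d (w - d) = perp_comp d w"
proof (cases "d = 0")
  case True then show ?thesis by (simp add: perp_comp_def)
next
  case False
  then have "d \<bullet> d \<noteq> 0" by simp
  then show ?thesis unfolding perp_comp_def
    by (simp add: inner_diff_left diff_divide_distrib algebra_simps)
qed

lemma nv_sym: "nv Y Z V = nv Z Y V"
proof -
  have "nv Z Y V = perp_comp (-(Z - Y)) ((V - Y) - (Z - Y))"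
    unfolding nv_def by (simp add: algebra_simps)
  also have "\<dots> = nv Y Z V" unfolding perp_neg perp_shift nv_def ..
  finally show ?thesis by simp
qed

lemma nv_expand: "nv Y Z V = (V - Y) - (((V - Y) \<bullet> (Z - Y)) / ((Z - Y) \<bullet> (Z - Y))) *\<^sub>R (Z - Y)"
  unfolding nv_def perp_comp_def ..

lemma nv_orth: "nv Y Z V \<bullet> (Z - Y) = 0"
proof (cases "Z - Y = 0")
  case True then show ?thesis by simp
next
  case False
  then have "(Z - Y) \<bullet> (Z - Y) \<noteq> 0" by simp
  then show ?thesis unfolding nv_expand by (simp add: inner_diff_left)
qed

lemma aa_pos:
  assumes "distinct [W,X,Y,Z]" "\<not> affine_dependent {W,X,Y,Z}"
  shows "aa Y Z W > 0"
proof (rule ccontr)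
  assume "\<not> aa Y Z W > 0"
  then have "nv Y Z W = 0" unfolding aa_def by (metis inner_gt_zero_iff)
  then have "1 *\<^sub>R (W - Y) + 0 *\<^sub>R (X - Y) + (- (((W - Y) \<bullet> (Z - Y)) / ((Z - Y) \<bullet> (Z - Y)))) *\<^sub>R (Z - Y) = 0"
    unfolding nv_expand by simp
  moreover have "{Y,W,X,Z} = {W,X,Y,Z}" by auto
  ultimately show False using LI[of Y W X Z 1 0 "- (((W - Y) \<bullet> (Z - Y)) / ((Z - Y) \<bullet> (Z - Y)))"] assms by auto
qed

lemma cs_strict:
  assumes "distinct [W,X,Y,Z]" "\<not> affine_dependent {W,X,Y,Z}"
  shows "(cq Y Z W X)^2 < aa Y Z W * aa Y Z X"
proof (rule ccontr)
  assume H: "\<not> (cq Y Z W X)^2 < aa Y Z W * aa Y Z X"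
  define c where "c = cq Y Z W X"
  define aW where "aW = aa Y Z W"
  define aX where "aX = aa Y Z X"
  have aW: "aW > 0" unfolding aW_def using aa_pos assms by blast
  define v where "v = aW *\<^sub>R nv Y Z X - c *\<^sub>R nv Y Z W"
  have "v \<bullet> v = aW * (aW * aX - c^2)"
    unfolding v_def c_def aW_def aX_def cq_def aa_def
    by (simp add: inner_diff_left inner_diff_right inner_commute power2_eq_square algebra_simps)
  also have "\<dots> \<le> 0" using H aW unfolding c_def aW_def aX_def
    by (simp add: mult_nonneg_nonpos)
  finally have "v = 0" by (metis inner_eq_zero_iff inner_ge_zero order_antisym)
  then have "(-c) *\<^sub>R (W - Y) + aW *\<^sub>R (X - Y) +
     (c * (((W - Y) \<bullet> (Z - Y)) / ((Z - Y) \<bullet> (Z - Y))) - aW * (((X - Y) \<bullet> (Z - Y)) / ((Z - Y) \<bullet> (Z - Y)))) *\<^sub>R (Z - Y) = 0"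
    unfolding v_def nv_expand by (simp add: algebra_simps)
  moreover have "{Y,W,X,Z} = {W,X,Y,Z}" by auto
  ultimately have "aW = 0" using LI[of Y W X Z "-c" aW] assms by auto
  with aW show False by simp
qed

lemma bary_K:
  assumes "\<mu>X + \<mu>Y + \<mu>Z = 1" "Q = \<mu>X *\<^sub>R X + \<mu>Y *\<^sub>R Y + \<mu>Z *\<^sub>R Z"
    and "(G - Q) \<bullet> (Y - X) = 0" "(G - Q) \<bullet> (Z - X) = 0"
  shows "\<mu>X * aa Y Z X = (G - Y) \<bullet> nv Y Z X"
proof -
  define k where "k = ((X - Y) \<bullet> (Z - Y)) / ((Z - Y) \<bullet> (Z - Y))"
  have n: "nv Y Z X = (-1) *\<^sub>R (Y - X) - k *\<^sub>R ((Z - X) - (Y - X))"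
    unfolding nv_expand k_def by (simp add: algebra_simps)
  have 1: "(G - Q) \<bullet> nv Y Z X = 0"
    unfolding n using assms(3,4) by (simp add: inner_diff_right inner_add_right)
  have QY: "Q - Y = \<mu>X *\<^sub>R (X - Y) + \<mu>Z *\<^sub>R (Z - Y)"
  proof -
    have "Q - Y = Q - (\<mu>X + \<mu>Y + \<mu>Z) *\<^sub>R Y" using assms(1) by simp
    then show ?thesis unfolding assms(2) by (simp add: algebra_simps)
  qed
  have XY: "(X - Y) \<bullet> nv Y Z X = aa Y Z X"
  proof -
    have "X - Y = nv Y Z X + k *\<^sub>R (Z - Y)" unfolding nv_expand k_def by simp
    then have "(X - Y) \<bullet> nv Y Z X = nv Y Z X \<bullet> nv Y Z X + k * ((Z - Y) \<bullet> nv Y Z X)"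
      by (metis inner_add_left inner_scaleR_left)
    then show ?thesis using nv_orth[of Y Z X] by (simp add: aa_def inner_commute)
  qed
  have "(G - Y) \<bullet> nv Y Z X = (G - Q) \<bullet> nv Y Z X + (Q - Y) \<bullet> nv Y Z X"
    by (simp add: inner_diff_left)
  also have "\<dots> = \<mu>X * aa Y Z X"
  proof -
    have "(Q - Y) \<bullet> nv Y Z X = \<mu>X * ((X - Y) \<bullet> nv Y Z X) + \<mu>Z * ((Z - Y) \<bullet> nv Y Z X)"
      unfolding QY by (simp add: inner_add_left)
    moreover have "(Z - Y) \<bullet> nv Y Z X = 0" using nv_orth[of Y Z X] by (simp add: inner_commute)
    ultimately show ?thesis using 1 XY by simp
  qed
  finally show ?thesis by simp
qed

lemma proj_exists:
  assumes "Y \<noteq> X" "aa X Y Z > 0"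
  shows "\<exists>\<mu>X \<mu>Y \<mu>Z. \<mu>X + \<mu>Y + \<mu>Z = 1 \<and>
     (G - (\<mu>X *\<^sub>R X + \<mu>Y *\<^sub>R Y + \<mu>Z *\<^sub>R Z)) \<bullet> (Y - X) = 0 \<and>
     (G - (\<mu>X *\<^sub>R X + \<mu>Y *\<^sub>R Y + \<mu>Z *\<^sub>R Z)) \<bullet> (Z - X) = 0"
proof -
  define u where "u = Y - X"
  define w where "w = Z - X"
  define g where "g = G - X"
  define \<Delta> where "\<Delta> = (u \<bullet> u) * (w \<bullet> w) - (u \<bullet> w)^2"
  have uu: "u \<bullet> u > 0" using assms(1) unfolding u_def by simp
  have "aa X Y Z = w \<bullet> w - (w \<bullet> u)^2 / (u \<bullet> u)"
    unfolding aa_def nv_expand u_def[symmetric] w_def[symmetric]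
    by (simp add: inner_diff_left inner_diff_right inner_commute power2_eq_square)
  then have "\<Delta> = (u \<bullet> u) * aa X Y Z" unfolding \<Delta>_def using uu
    by (simp add: field_simps inner_commute)
  then have D: "\<Delta> > 0" using uu assms(2) by simp
  define s where "s = ((g \<bullet> u) * (w \<bullet> w) - (g \<bullet> w) * (u \<bullet> w)) / \<Delta>"
  define t where "t = ((g \<bullet> w) * (u \<bullet> u) - (g \<bullet> u) * (u \<bullet> w)) / \<Delta>"
  have e: "(1 - s - t) *\<^sub>R X + s *\<^sub>R Y + t *\<^sub>R Z = X + s *\<^sub>R u + t *\<^sub>R w"
    unfolding u_def w_def by (simp add: algebra_simps)
  have eqG: "G - ((1 - s - t) *\<^sub>R X + s *\<^sub>R Y + t *\<^sub>R Z) = g - s *\<^sub>R u - t *\<^sub>R w" unfolding e g_def by simp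
  have alg: "\<And>a b c p q \<Delta> :: real. \<Delta> = a * c - b^2 \<Longrightarrow> \<Delta> \<noteq> 0 \<Longrightarrow>
      ((p * c - q * b) / \<Delta>) * a + ((q * a - p * b) / \<Delta>) * b = p \<and>
      ((p * c - q * b) / \<Delta>) * b + ((q * a - p * b) / \<Delta>) * c = q"
  proof -
    fix a b c p q \<Delta> :: real
    assume h: "\<Delta> = a * c - b^2" "\<Delta> \<noteq> 0"
    have "((p * c - q * b) / \<Delta>) * a + ((q * a - p * b) / \<Delta>) * b = p * (a * c - b^2) / \<Delta>"
      using h(2) by (simp add: field_simps power2_eq_square)
    moreover have "((p * c - q * b) / \<Delta>) * b + ((q * a - p * b) / \<Delta>) * c = q * (a * c - b^2) / \<Delta>"
      using h(2) by (simp add: field_simps power2_eq_square)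
    ultimately show "((p * c - q * b) / \<Delta>) * a + ((q * a - p * b) / \<Delta>) * b = p \<and>
      ((p * c - q * b) / \<Delta>) * b + ((q * a - p * b) / \<Delta>) * c = q" using h by simp
  qed
  have A1: "s * (u \<bullet> u) + t * (u \<bullet> w) = g \<bullet> u" "s * (u \<bullet> w) + t * (w \<bullet> w) = g \<bullet> w"
    using alg[of \<Delta> "u \<bullet> u" "w \<bullet> w" "u \<bullet> w" "g \<bullet> u" "g \<bullet> w"] D
    unfolding s_def t_def \<Delta>_def by auto
  have O1: "(g - s *\<^sub>R u - t *\<^sub>R w) \<bullet> u = 0"
    using A1 by (simp add: inner_diff_left inner_commute[of w u])
  have O2: "(g - s *\<^sub>R u - t *\<^sub>R w) \<bullet> w = 0"
    using A1 by (simp add: inner_diff_left)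
  show ?thesis
    apply (rule exI[of _ "1 - s - t"], rule exI[of _ s], rule exI[of _ t])
    using O1 O2 unfolding eqG by (simp add: u_def w_def)
qed

lemma KK:
  assumes "\<mu>X + \<mu>Y + \<mu>Z = 1" "Q = \<mu>X *\<^sub>R X + \<mu>Y *\<^sub>R Y + \<mu>Z *\<^sub>R Z"
    and "(G - Q) \<bullet> (Y - X) = 0" "(G - Q) \<bullet> (Z - X) = 0"
    and "lP + lX + lY + lZ = 1" "G = lP *\<^sub>R P + lX *\<^sub>R X + lY *\<^sub>R Y + lZ *\<^sub>R Z"
  shows "\<mu>X * aa Y Z X = lX * aa Y Z X + lP * cq Y Z P X"
proof -
  have 1: "\<mu>X * aa Y Z X = (G - Y) \<bullet> nv Y Z X" using bary_K assms(1-4) by blast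
  have GY: "G - Y = lP *\<^sub>R (P - Y) + lX *\<^sub>R (X - Y) + lZ *\<^sub>R (Z - Y)"
  proof -
    have "G - Y = G - (lP + lX + lY + lZ) *\<^sub>R Y" using assms(5) by simp
    then show ?thesis unfolding assms(6) by (simp add: algebra_simps)
  qed
  define k where "k = ((X - Y) \<bullet> (Z - Y)) / ((Z - Y) \<bullet> (Z - Y))"
  define kP where "kP = ((P - Y) \<bullet> (Z - Y)) / ((Z - Y) \<bullet> (Z - Y))"
  have ZY: "(Z - Y) \<bullet> nv Y Z X = 0" using nv_orth[of Y Z X] by (simp add: inner_commute)
  have XY: "(X - Y) \<bullet> nv Y Z X = aa Y Z X"
  proof -
    have "X - Y = nv Y Z X + k *\<^sub>R (Z - Y)" unfolding nv_expand k_def by simp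
    then have "(X - Y) \<bullet> nv Y Z X = nv Y Z X \<bullet> nv Y Z X + k * ((Z - Y) \<bullet> nv Y Z X)"
      by (metis inner_add_left inner_scaleR_left)
    then show ?thesis using ZY by (simp add: aa_def)
  qed
  have PY: "(P - Y) \<bullet> nv Y Z X = cq Y Z P X"
  proof -
    have "P - Y = nv Y Z P + kP *\<^sub>R (Z - Y)" unfolding nv_expand kP_def by simp
    then have "(P - Y) \<bullet> nv Y Z X = nv Y Z P \<bullet> nv Y Z X + kP * ((Z - Y) \<bullet> nv Y Z X)"
      by (metis inner_add_left inner_scaleR_left)
    then show ?thesis using ZY by (simp add: cq_def)
  qed
  have "(G - Y) \<bullet> nv Y Z X = lP * ((P - Y) \<bullet> nv Y Z X) + lX * ((X - Y) \<bullet> nv Y Z X) + lZ * ((Z - Y) \<bullet> nv Y Z X)"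
    unfolding GY by (simp add: inner_add_left)
  then show ?thesis using 1 XY PY ZY by simp
qed

lemma sum3:
  assumes "distinct [X,Y,Z]"
  shows "sum u {X,Y,Z} = u X + u Y + u Z" "(\<Sum>v\<in>{X,Y,Z}. u v *\<^sub>R v) = u X *\<^sub>R X + u Y *\<^sub>R Y + u Z *\<^sub>R Z"
  using assms by (simp_all add: algebra_simps)

lemma EQ:
  assumes dist: "distinct [P,X,Y,Z]" and ind: "\<not> affine_dependent {P,X,Y,Z}"
    and pos: "lP > 0" "lX > 0" "lY > 0" "lZ > 0" and s1: "lP + lX + lY + lZ = 1"
    and G: "G = lP *\<^sub>R P + lX *\<^sub>R X + lY *\<^sub>R Y + lZ *\<^sub>R Z"
  shows "equilibrium_on (convex hull {P,X,Y,Z}) G (convex hull {X,Y,Z}) \<longleftrightarrow>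
    (lX * aa Y Z X + lP * cq Y Z P X > 0 \<and> lY * aa X Z Y + lP * cq X Z P Y > 0 \<and>
     lZ * aa X Y Z + lP * cq X Y P Z > 0)"
proof -
  have ind3: "\<not> affine_dependent {X,Y,Z}" using ind affine_independent_subset[of "{P,X,Y,Z}" "{X,Y,Z}"] by auto
  have d3: "distinct [X,Y,Z]" using dist by auto
  have ri: "rel_interior (convex hull {X,Y,Z}) = {y. \<exists>u. (\<forall>x\<in>{X,Y,Z}. 0 < u x) \<and> u X + u Y + u Z = 1 \<and> u X *\<^sub>R X + u Y *\<^sub>R Y + u Z *\<^sub>R Z = y}"
    unfolding rel_interior_convex_hull_explicit[OF ind3] sum3[OF d3] ..
  have aX: "aa Y Z X > 0"
  proof -
    have "{X,P,Y,Z} = {P,X,Y,Z}" "distinct [X,P,Y,Z]" using dist by auto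
    then show ?thesis using aa_pos[of X P Y Z] ind by simp
  qed
  have aY: "aa X Z Y > 0"
  proof -
    have "{Y,P,X,Z} = {P,X,Y,Z}" "distinct [Y,P,X,Z]" using dist by auto
    then show ?thesis using aa_pos[of Y P X Z] ind by simp
  qed
  have aZ: "aa X Y Z > 0"
  proof -
    have "{Z,P,X,Y} = {P,X,Y,Z}" "distinct [Z,P,X,Y]" using dist by auto
    then show ?thesis using aa_pos[of Z P X Y] ind by simp
  qed
  have main: "\<mu>X * aa Y Z X = lX * aa Y Z X + lP * cq Y Z P X \<and>
              \<mu>Y * aa X Z Y = lY * aa X Z Y + lP * cq X Z P Y \<and>
              \<mu>Z * aa X Y Z = lZ * aa X Y Z + lP * cq X Y P Z"
    if m1: "\<mu>X + \<mu>Y + \<mu>Z = 1" and mQ: "Q = \<mu>X *\<^sub>R X + \<mu>Y *\<^sub>R Y + \<mu>Z *\<^sub>R Z"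
      and o1: "(G - Q) \<bullet> (Y - X) = 0" and o2: "(G - Q) \<bullet> (Z - X) = 0" for \<mu>X \<mu>Y \<mu>Z Q
  proof -
    have o3: "(G - Q) \<bullet> (X - Y) = 0" using o1 by (simp add: inner_diff_right)
    have o4: "(G - Q) \<bullet> (Z - Y) = 0" using o1 o2 by (simp add: inner_diff_right)
    have o5: "(G - Q) \<bullet> (X - Z) = 0" using o2 by (simp add: inner_diff_right)
    have o6: "(G - Q) \<bullet> (Y - Z) = 0" using o4 by (simp add: inner_diff_right)
    show ?thesis
    proof (intro conjI)
      show "\<mu>X * aa Y Z X = lX * aa Y Z X + lP * cq Y Z P X"
        using KK[OF m1 mQ o1 o2 s1 G] .
      show "\<mu>Y * aa X Z Y = lY * aa X Z Y + lP * cq X Z P Y"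
        using KK[of \<mu>Y \<mu>X \<mu>Z Q Y X Z G lP lY lX lZ P] m1 mQ o3 o4 s1 G by (simp add: algebra_simps)
      show "\<mu>Z * aa X Y Z = lZ * aa X Y Z + lP * cq X Y P Z"
        using KK[of \<mu>Z \<mu>X \<mu>Y Q Z X Y G lP lZ lX lY P] m1 mQ o5 o6 s1 G by (simp add: algebra_simps)
    qed
  qed
  show ?thesis
  proof
    assume "equilibrium_on (convex hull {P,X,Y,Z}) G (convex hull {X,Y,Z})"
    then obtain Q where Qri: "Q \<in> rel_interior (convex hull {X,Y,Z})"
      and sup: "\<forall>V\<in>convex hull {P,X,Y,Z}. (V - Q) \<bullet> (Q - G) \<le> 0"
      unfolding equilibrium_on_def perp_plane_supports_def by blast
    from Qri obtain u where u: "u X > 0" "u Y > 0" "u Z > 0" "u X + u Y + u Z = 1"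
      "Q = u X *\<^sub>R X + u Y *\<^sub>R Y + u Z *\<^sub>R Z" unfolding ri by auto
    have sX: "(X - Q) \<bullet> (Q - G) \<le> 0" using sup hull_inc[of X "{P,X,Y,Z}"] by auto
    have sY: "(Y - Q) \<bullet> (Q - G) \<le> 0" using sup hull_inc[of Y "{P,X,Y,Z}"] by auto
    have sZ: "(Z - Q) \<bullet> (Q - G) \<le> 0" using sup hull_inc[of Z "{P,X,Y,Z}"] by auto
    have "u X *\<^sub>R (X - Q) + u Y *\<^sub>R (Y - Q) + u Z *\<^sub>R (Z - Q) = Q - (u X + u Y + u Z) *\<^sub>R Q"
      using u(5) by (simp add: algebra_simps)
    then have "u X *\<^sub>R (X - Q) + u Y *\<^sub>R (Y - Q) + u Z *\<^sub>R (Z - Q) = 0" using u(4) by simp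
    then have "u X * ((X - Q) \<bullet> (Q - G)) + u Y * ((Y - Q) \<bullet> (Q - G)) + u Z * ((Z - Q) \<bullet> (Q - G)) = 0"
      by (metis inner_add_left inner_scaleR_left inner_zero_left)
    moreover have "u X * ((X - Q) \<bullet> (Q - G)) \<le> 0" using sX u(1) by (simp add: mult_nonneg_nonpos)
    moreover have "u Y * ((Y - Q) \<bullet> (Q - G)) \<le> 0" using sY u(2) by (simp add: mult_nonneg_nonpos)
    moreover have "u Z * ((Z - Q) \<bullet> (Q - G)) \<le> 0" using sZ u(3) by (simp add: mult_nonneg_nonpos)
    ultimately have "u X * ((X - Q) \<bullet> (Q - G)) = 0" "u Y * ((Y - Q) \<bullet> (Q - G)) = 0" "u Z * ((Z - Q) \<bullet> (Q - G)) = 0"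
      by linarith+
    then have z: "(X - Q) \<bullet> (Q - G) = 0" "(Y - Q) \<bullet> (Q - G) = 0" "(Z - Q) \<bullet> (Q - G) = 0"
      using u(1-3) by auto
    have o1: "(G - Q) \<bullet> (Y - X) = 0"
    proof -
      have "(G - Q) \<bullet> (Y - X) = (X - Q) \<bullet> (Q - G) - (Y - Q) \<bullet> (Q - G)"
        by (simp add: inner_diff_left inner_diff_right inner_commute algebra_simps)
      then show ?thesis using z by simp
    qed
    have o2: "(G - Q) \<bullet> (Z - X) = 0"
    proof -
      have "(G - Q) \<bullet> (Z - X) = (X - Q) \<bullet> (Q - G) - (Z - Q) \<bullet> (Q - G)"
        by (simp add: inner_diff_left inner_diff_right inner_commute algebra_simps)
      then show ?thesis using z by simp
    qed
    have m: "u X * aa Y Z X = lX * aa Y Z X + lP * cq Y Z P X \<and>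
              u Y * aa X Z Y = lY * aa X Z Y + lP * cq X Z P Y \<and>
              u Z * aa X Y Z = lZ * aa X Y Z + lP * cq X Y P Z"
      using main[OF u(4) u(5) o1 o2] .
    show "lX * aa Y Z X + lP * cq Y Z P X > 0 \<and> lY * aa X Z Y + lP * cq X Z P Y > 0 \<and>
     lZ * aa X Y Z + lP * cq X Y P Z > 0"
    proof (intro conjI)
      have "u X * aa Y Z X > 0" using u(1) aX by simp
      then show "lX * aa Y Z X + lP * cq Y Z P X > 0" using m by simp
      have "u Y * aa X Z Y > 0" using u(2) aY by simp
      then show "lY * aa X Z Y + lP * cq X Z P Y > 0" using m by simp
      have "u Z * aa X Y Z > 0" using u(3) aZ by simp
      then show "lZ * aa X Y Z + lP * cq X Y P Z > 0" using m by simp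
    qed
  next
    assume C: "lX * aa Y Z X + lP * cq Y Z P X > 0 \<and> lY * aa X Z Y + lP * cq X Z P Y > 0 \<and>
     lZ * aa X Y Z + lP * cq X Y P Z > 0"
    have YX: "Y \<noteq> X" using dist by auto
    obtain \<mu>X \<mu>Y \<mu>Z where m1: "\<mu>X + \<mu>Y + \<mu>Z = 1"
      and o1: "(G - (\<mu>X *\<^sub>R X + \<mu>Y *\<^sub>R Y + \<mu>Z *\<^sub>R Z)) \<bullet> (Y - X) = 0"
      and o2: "(G - (\<mu>X *\<^sub>R X + \<mu>Y *\<^sub>R Y + \<mu>Z *\<^sub>R Z)) \<bullet> (Z - X) = 0"
      using proj_exists[OF YX aZ, of G] by blast
    define Q where "Q = \<mu>X *\<^sub>R X + \<mu>Y *\<^sub>R Y + \<mu>Z *\<^sub>R Z"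
    have m: "\<mu>X * aa Y Z X = lX * aa Y Z X + lP * cq Y Z P X \<and>
              \<mu>Y * aa X Z Y = lY * aa X Z Y + lP * cq X Z P Y \<and>
              \<mu>Z * aa X Y Z = lZ * aa X Y Z + lP * cq X Y P Z"
      using main[OF m1 Q_def] o1 o2 unfolding Q_def by blast
    have mpos: "\<mu>X > 0" "\<mu>Y > 0" "\<mu>Z > 0"
    proof -
      have "\<mu>X * aa Y Z X > 0" "\<mu>Y * aa X Z Y > 0" "\<mu>Z * aa X Y Z > 0" using m C by auto
      then show "\<mu>X > 0" "\<mu>Y > 0" "\<mu>Z > 0" using aX aY aZ zero_less_mult_pos2 by blast+
    qed
    have Qri: "Q \<in> rel_interior (convex hull {X,Y,Z})"
      unfolding ri
      apply (simp)
      apply (rule exI[of _ "\<lambda>v. if v = X then \<mu>X else if v = Y then \<mu>Y else \<mu>Z"])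
      using d3 mpos m1 by (auto simp: Q_def)
    have QT: "Q \<in> convex hull {P,X,Y,Z}"
      using Qri rel_interior_subset hull_mono[of "{X,Y,Z}" "{P,X,Y,Z}"] by blast
    have o1': "(G - Q) \<bullet> (Y - X) = 0" "(G - Q) \<bullet> (Z - X) = 0" using o1 o2 Q_def by auto
    have QG: "Q \<noteq> G"
    proof
      assume "Q = G"
      have "(lX - \<mu>X) *\<^sub>R (X - P) + (lY - \<mu>Y) *\<^sub>R (Y - P) + (lZ - \<mu>Z) *\<^sub>R (Z - P) = G - Q"
      proof -
        have e1: "lP = 1 - lX - lY - lZ" and e2: "\<mu>X = 1 - \<mu>Y - \<mu>Z" using s1 m1 by auto
        show ?thesis unfolding G Q_def e1 e2 by (simp add: algebra_simps)
      qed
      then have "lX - \<mu>X = 0 \<and> lY - \<mu>Y = 0 \<and> lZ - \<mu>Z = 0" using LI[OF dist ind, of "lX - \<mu>X" "lY - \<mu>Y" "lZ - \<mu>Z"] \<open>Q = G\<close> by simp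
      then show False using s1 m1 pos(1) by simp
    qed
    have c0: "(G - Q) \<bullet> X = (G - Q) \<bullet> Q" "(G - Q) \<bullet> Y = (G - Q) \<bullet> Q" "(G - Q) \<bullet> Z = (G - Q) \<bullet> Q"
    proof -
      have eY: "(G - Q) \<bullet> Y = (G - Q) \<bullet> X" using o1'(1) by (simp add: inner_diff_right)
      have eZ: "(G - Q) \<bullet> Z = (G - Q) \<bullet> X" using o1'(2) by (simp add: inner_diff_right)
      have "(G - Q) \<bullet> Q = \<mu>X * ((G - Q) \<bullet> X) + \<mu>Y * ((G - Q) \<bullet> Y) + \<mu>Z * ((G - Q) \<bullet> Z)"
        unfolding Q_def[of] by (simp add: inner_add_right)
      also have "\<dots> = (\<mu>X + \<mu>Y + \<mu>Z) * ((G - Q) \<bullet> X)" by (simp only: eY eZ) (simp add: algebra_simps)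
      finally have "(G - Q) \<bullet> Q = (G - Q) \<bullet> X" using m1 by simp
      then show "(G - Q) \<bullet> X = (G - Q) \<bullet> Q" "(G - Q) \<bullet> Y = (G - Q) \<bullet> Q" "(G - Q) \<bullet> Z = (G - Q) \<bullet> Q"
        using eY eZ by auto
    qed
    have cP: "(G - Q) \<bullet> P \<ge> (G - Q) \<bullet> Q"
    proof -
      have "G - Q = lP *\<^sub>R (P - Q) + lX *\<^sub>R (X - Q) + lY *\<^sub>R (Y - Q) + lZ *\<^sub>R (Z - Q)"
      proof -
        have "G - Q = G - (lP + lX + lY + lZ) *\<^sub>R Q" using s1 by simp
        then show ?thesis unfolding G by (simp add: algebra_simps)
      qed
      then have "(G - Q) \<bullet> (G - Q) = lP * ((G - Q) \<bullet> (P - Q)) + lX * ((G - Q) \<bullet> (X - Q)) + lY * ((G - Q) \<bullet> (Y - Q)) + lZ * ((G - Q) \<bullet> (Z - Q))"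
        by (metis inner_add_right inner_scaleR_right)
      then have "(G - Q) \<bullet> (G - Q) = lP * ((G - Q) \<bullet> (P - Q))" using c0 by (simp add: inner_diff_right)
      then have "lP * ((G - Q) \<bullet> (P - Q)) \<ge> 0" by (metis inner_ge_zero)
      then have "(G - Q) \<bullet> (P - Q) \<ge> 0" using pos(1) by (simp add: zero_le_mult_iff)
      then show ?thesis by (simp add: inner_diff_right)
    qed
    have hs: "convex hull {P,X,Y,Z} \<subseteq> {V. (Q - G) \<bullet> V \<le> (Q - G) \<bullet> Q}"
      apply (rule hull_minimal)
      using c0 cP apply (auto simp: inner_diff_left)[1]
      by (rule convex_halfspace_le)
    have "perp_plane_supports (convex hull {P,X,Y,Z}) G Q"
      unfolding perp_plane_supports_def
    proof (intro conjI ballI)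
      show "Q \<noteq> G" by (rule QG)
      show "Q \<in> convex hull {P,X,Y,Z}" by (rule QT)
      fix V assume "V \<in> convex hull {P,X,Y,Z}"
      then have "(Q - G) \<bullet> V \<le> (Q - G) \<bullet> Q" using hs by auto
      moreover have "(V - Q) \<bullet> (Q - G) = (Q - G) \<bullet> V - (Q - G) \<bullet> Q"
        by (simp add: inner_diff_left inner_diff_right inner_commute)
      ultimately show "(V - Q) \<bullet> (Q - G) \<le> 0" by simp
    qed
    then show "equilibrium_on (convex hull {P,X,Y,Z}) G (convex hull {X,Y,Z})"
      unfolding equilibrium_on_def using Qri by blast
  qed
qed



lemma comb:
  fixes dA dB dC dD :: real
  assumes fA: "\<not> EA \<Longrightarrow> (oCD \<and> dB < dA) \<or> (oBD \<and> dC < dA) \<or> (oBC \<and> dD < dA)"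
    and fB: "\<not> EB \<Longrightarrow> (oCD \<and> dA < dB) \<or> (oAD \<and> dC < dB) \<or> (oAC \<and> dD < dB)"
    and fC: "\<not> EC \<Longrightarrow> (oBD \<and> dA < dC) \<or> (oAD \<and> dB < dC) \<or> (oAB \<and> dD < dC)"
    and fD: "\<not> ED \<Longrightarrow> (oBC \<and> dA < dD) \<or> (oAC \<and> dB < dD) \<or> (oAB \<and> dC < dD)"
    and t: "\<not> (oBC \<and> oBD \<and> oCD)" "\<not> (oAC \<and> oAD \<and> oCD)" "\<not> (oAB \<and> oAD \<and> oBD)" "\<not> (oAB \<and> oAC \<and> oBC)"
    and one: "(\<not>EA \<and> \<not>EB \<and> \<not>EC) \<or> (\<not>EA \<and> \<not>EB \<and> \<not>ED) \<or> (\<not>EA \<and> \<not>EC \<and> \<not>ED) \<or> (\<not>EB \<and> \<not>EC \<and> \<not>ED)"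
  shows "(oAB \<and> oBC \<and> oCD) \<or> (oAB \<and> oBD \<and> oCD) \<or> (oAC \<and> oBC \<and> oBD) \<or> (oAC \<and> oCD \<and> oBD) \<or>
         (oAD \<and> oBD \<and> oBC) \<or> (oAD \<and> oCD \<and> oBC) \<or> (oAB \<and> oAC \<and> oCD) \<or> (oAB \<and> oAD \<and> oCD) \<or>
         (oAC \<and> oAB \<and> oBD) \<or> (oAC \<and> oAD \<and> oBD) \<or> (oAD \<and> oAB \<and> oBC) \<or> (oAD \<and> oAC \<and> oBC)"
  using assms by smt

lemma cq_comm: "cq Y Z W X = cq Y Z X W"
  unfolding cq_def by (simp add: inner_commute)

lemma cq_edge: "cq Y Z W X = cq Z Y W X"
  unfolding cq_def using nv_sym by metis

lemma gg_sym1: "gg Y Z X = gg Y X Z"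
  unfolding gg_def by (simp add: inner_commute algebra_simps)

lemma gg_sym2: "gg Y Z X = gg Z Y X"
proof -
  define u where "u = Z - Y"
  define v where "v = X - Y"
  have 1: "Y - Z = - u" "X - Z = v - u" unfolding u_def v_def by auto
  show ?thesis unfolding gg_def 1 u_def[symmetric] v_def[symmetric]
    by (simp add: inner_diff_left inner_diff_right inner_commute power2_eq_square algebra_simps)
qed

lemma gg_aa: "gg Y Z X = aa Y Z X * ((Z - Y) \<bullet> (Z - Y))"
proof (cases "Z = Y")
  case True then show ?thesis by (simp add: gg_def)
next
  case False
  define d where "d = Z - Y"
  define x where "x = X - Y"
  have dd: "d \<bullet> d > 0" using False unfolding d_def by simp
  have "aa Y Z X = x \<bullet> x - (x \<bullet> d)^2 / (d \<bullet> d)"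
    unfolding aa_def nv_expand d_def[symmetric] x_def[symmetric]
    using dd by (simp add: inner_diff_left inner_diff_right inner_commute power2_eq_square field_simps)
  then show ?thesis unfolding gg_def d_def[symmetric] x_def[symmetric] using dd
    by (simp add: field_simps power2_eq_square inner_commute)
qed

lemma FAIL:
  assumes "distinct [W,X,Y,Z]" "\<not> affine_dependent {W,X,Y,Z}" "lW > 0" "lX > 0"
    and "\<not> (lX * aa Y Z X + lW * cq Y Z W X > 0)"
  shows "cq Y Z W X < 0 \<and> lX^2 / gg Y Z W < lW^2 / gg Y Z X"
proof -
  define c where "c = cq Y Z W X"
  define aW where "aW = aa Y Z W"
  define aX where "aX = aa Y Z X"
  have cs: "c^2 < aW * aX" unfolding c_def aW_def aX_def using cs_strict assms(1,2) by blast
  have paW: "aW > 0" unfolding aW_def using aa_pos assms(1,2) by blast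
  have paX: "aX > 0" unfolding aX_def
  proof -
    have "{X,W,Y,Z} = {W,X,Y,Z}" "distinct [X,W,Y,Z]" using assms(1) by auto
    then show "aa Y Z X > 0" using aa_pos[of X W Y Z] assms(2) by simp
  qed
  have h: "lX * aX \<le> - (lW * c)" using assms(5) unfolding c_def aX_def by simp
  have lxa: "lX * aX > 0" using assms(4) paX by simp
  then have "lW * c < 0" using h by simp
  then have cneg: "c < 0" using assms(3) by (simp add: mult_less_0_iff)
  have "(lX * aX)^2 \<le> (lW * c)^2" using h lxa
    by (metis abs_of_pos abs_le_square_iff abs_minus_cancel abs_of_nonneg less_imp_le order_trans abs_ge_self power2_abs)
  also have "\<dots> = lW^2 * c^2" by (simp add: power_mult_distrib)
  also have "\<dots> < lW^2 * (aW * aX)" using cs assms(3) by simp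
  finally have "lX^2 * aX * aX < lW^2 * aW * aX" by (simp add: power2_eq_square algebra_simps)
  then have k: "lX^2 * aX < lW^2 * aW" using paX by simp
  define L where "L = (Z - Y) \<bullet> (Z - Y)"
  have YZ: "L > 0" using assms(1) unfolding L_def by auto
  have gW: "gg Y Z W = aW * L" unfolding aW_def L_def by (rule gg_aa)
  have gX: "gg Y Z X = aX * L" unfolding aX_def L_def by (rule gg_aa)
  have p1: "aW * L > 0" "aX * L > 0" using paW paX YZ by auto
  have "lX^2 * (aX * L) < lW^2 * (aW * L)"
    using mult_strict_right_mono[OF k YZ] by (simp add: algebra_simps)
  moreover have "\<And>a b c d :: real. b > 0 \<Longrightarrow> d > 0 \<Longrightarrow> a * d < c * b \<Longrightarrow> a / b < c / d"
    by (simp add: divide_simps)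
  ultimately have "lX^2 / gg Y Z W < lW^2 / gg Y Z X"
    unfolding gW gX using p1 by blast
  then show ?thesis using cneg unfolding c_def by simp
qed

lemma gg_pos:
  assumes "distinct [W,X,Y,Z]" "\<not> affine_dependent {W,X,Y,Z}"
  shows "gg Y Z W > 0"
proof -
  have "(Z - Y) \<bullet> (Z - Y) > 0" using assms(1) by auto
  then show ?thesis using aa_pos[OF assms] gg_aa[of Y Z W] by simp
qed

lemma TRI:
  assumes dist: "distinct [P,X,Y,Z]" and ind: "\<not> affine_dependent {P,X,Y,Z}"
  shows "\<not> (cq Y Z P X < 0 \<and> cq X Z P Y < 0 \<and> cq X Y P Z < 0)"
proof
  assume H: "cq Y Z P X < 0 \<and> cq X Z P Y < 0 \<and> cq X Y P Z < 0"
  have aX: "aa Y Z X > 0"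
  proof -
    have "{X,P,Y,Z} = {P,X,Y,Z}" "distinct [X,P,Y,Z]" using dist by auto
    then show ?thesis using aa_pos[of X P Y Z] ind by simp
  qed
  have aY: "aa X Z Y > 0"
  proof -
    have "{Y,P,X,Z} = {P,X,Y,Z}" "distinct [Y,P,X,Z]" using dist by auto
    then show ?thesis using aa_pos[of Y P X Z] ind by simp
  qed
  have aZ: "aa X Y Z > 0"
  proof -
    have "{Z,P,X,Y} = {P,X,Y,Z}" "distinct [Z,P,X,Y]" using dist by auto
    then show ?thesis using aa_pos[of Z P X Y] ind by simp
  qed
  have YX: "Y \<noteq> X" using dist by auto
  obtain \<mu>X \<mu>Y \<mu>Z where m1: "\<mu>X + \<mu>Y + \<mu>Z = 1"
      and o1: "(P - (\<mu>X *\<^sub>R X + \<mu>Y *\<^sub>R Y + \<mu>Z *\<^sub>R Z)) \<bullet> (Y - X) = 0"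
      and o2: "(P - (\<mu>X *\<^sub>R X + \<mu>Y *\<^sub>R Y + \<mu>Z *\<^sub>R Z)) \<bullet> (Z - X) = 0"
    using proj_exists[OF YX aZ, of P] by blast
  define Q where "Q = \<mu>X *\<^sub>R X + \<mu>Y *\<^sub>R Y + \<mu>Z *\<^sub>R Z"
  have o1': "(P - Q) \<bullet> (Y - X) = 0" "(P - Q) \<bullet> (Z - X) = 0" using o1 o2 Q_def by auto
  have o3: "(P - Q) \<bullet> (X - Y) = 0" using o1' by (simp add: inner_diff_right)
  have o4: "(P - Q) \<bullet> (Z - Y) = 0" using o1' by (simp add: inner_diff_right)
  have o5: "(P - Q) \<bullet> (X - Z) = 0" using o1' by (simp add: inner_diff_right)
  have o6: "(P - Q) \<bullet> (Y - Z) = 0" using o4 by (simp add: inner_diff_right)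
  have s1: "1 + 0 + 0 + 0 = (1::real)" by simp
  have G: "P = 1 *\<^sub>R P + 0 *\<^sub>R X + 0 *\<^sub>R Y + 0 *\<^sub>R Z" by simp
  have "\<mu>X * aa Y Z X = 0 * aa Y Z X + 1 * cq Y Z P X"
    using KK[OF m1 Q_def o1' s1 G] .
  then have "\<mu>X * aa Y Z X < 0" using H by linarith
  then have nX: "\<mu>X < 0" using aX by (auto simp add: mult_less_0_iff)
  have "\<mu>Y * aa X Z Y = 0 * aa X Z Y + 1 * cq X Z P Y"
    using KK[of \<mu>Y \<mu>X \<mu>Z Q Y X Z P 1 0 0 0 P] m1 Q_def o3 o4 by (simp add: algebra_simps)
  then have "\<mu>Y * aa X Z Y < 0" using H by linarith
  then have nY: "\<mu>Y < 0" using aY by (auto simp add: mult_less_0_iff)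
  have "\<mu>Z * aa X Y Z = 0 * aa X Y Z + 1 * cq X Y P Z"
    using KK[of \<mu>Z \<mu>X \<mu>Y Q Z X Y P 1 0 0 0 P] m1 Q_def o5 o6 by (simp add: algebra_simps)
  then have "\<mu>Z * aa X Y Z < 0" using H by linarith
  then have nZ: "\<mu>Z < 0" using aZ by (auto simp add: mult_less_0_iff)
  show False using nX nY nZ m1 by simp
qed

lemma vec_angle_obtuse: "vec_angle u v > pi / 2 \<longleftrightarrow> u \<bullet> v < 0"
proof -
  define x where "x = (u \<bullet> v) / (norm u * norm v)"
  have b: "-1 \<le> x \<and> x \<le> 1"
  proof (cases "norm u * norm v = 0")
    case True then show ?thesis unfolding x_def by auto
  next
    case False
    then have p: "norm u * norm v > 0" by simp
    have "\<bar>u \<bullet> v\<bar> \<le> norm u * norm v" by (rule Cauchy_Schwarz_ineq2)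
    then show ?thesis unfolding x_def using p by (simp add: divide_simps abs_le_iff)
  qed
  have sx: "x < 0 \<longleftrightarrow> u \<bullet> v < 0"
  proof (cases "norm u * norm v = 0")
    case True
    then have "u = 0 \<or> v = 0" by simp
    then show ?thesis unfolding x_def by auto
  next
    case False
    then have p: "norm u * norm v > 0" by simp
    then show ?thesis unfolding x_def by (simp add: divide_less_0_iff)
  qed
  have "pi / 2 = arccos 0" by simp
  have "arccos x > arccos 0 \<longleftrightarrow> x < 0"
  proof
    assume "arccos x > arccos 0"
    show "x < 0"
    proof (rule ccontr)
      assume "\<not> x < 0"
      then have "arccos x \<le> arccos 0" using b arccos_le_arccos[of 0 x] by simp
      with \<open>arccos x > arccos 0\<close> show False by simp
    qed
  next
    assume "x < 0" then show "arccos x > arccos 0" using b arccos_less_arccos[of x 0] by simp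
  qed
  then show ?thesis unfolding vec_angle_def x_def[symmetric] using sx by simp
qed

lemma dihedral_cq: "dihedral_angle a b c d > pi / 2 \<longleftrightarrow> cq a b c d < 0"
  unfolding dihedral_angle_def cq_def nv_def using vec_angle_obtuse by simp



lemma not_in_hull_rest:
  assumes "\<not> affine_dependent S" "x \<in> S"
  shows "x \<notin> convex hull (S - {x})"
  using assms convex_hull_subset_affine_hull unfolding affine_dependent_def by blast

lemma facet_distinct:
  assumes "\<not> affine_dependent S" "u \<in> S" "v \<in> S" "u \<noteq> v"
  shows "convex hull (S - {u}) \<noteq> convex hull (S - {v})"
proof
  assume e: "convex hull (S - {u}) = convex hull (S - {v})"
  have "u \<in> convex hull (S - {v})" using assms(2,4) by (simp add: hull_inc)
  with e not_in_hull_rest[OF assms(1,2)] show False by simp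
qed

lemma facet3_iff:
  fixes S :: "(real^3) set"
  assumes "\<not> affine_dependent S" "card S = 4"
  shows "facet3 F (convex hull S) \<longleftrightarrow> (\<exists>u\<in>S. F = convex hull (S - {u}))"
proof -
  have "of_nat (card S) = aff_dim S + 1" using aff_dim_affine_independent[OF assms(1)] .
  then have a3: "aff_dim (convex hull S) = 3" using assms(2) by (simp add: aff_dim_convex_hull)
  have "facet3 F (convex hull S) \<longleftrightarrow> F facet_of (convex hull S)"
    unfolding facet3_def facet_of_def a3 by auto
  also have "\<dots> \<longleftrightarrow> F \<noteq> {} \<and> (\<exists>u\<in>S. F = convex hull (S - {u}))"
    using facet_of_convex_hull_affine_independent[OF assms(1)] by blast
  also have "\<dots> \<longleftrightarrow> (\<exists>u\<in>S. F = convex hull (S - {u}))"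
  proof -
    have "S - {u} \<noteq> {}" if "u \<in> S" for u
    proof -
      have "card (S - {u}) = 3" using assms(2) that by simp
      then show ?thesis by (metis card.empty zero_neq_numeral)
    qed
    then show ?thesis by auto
  qed
  finally show ?thesis .
qed

lemma facets4:
  fixes A B C D :: "real^3"
  assumes d: "distinct [A,B,C,D]" and i: "\<not> affine_dependent {A,B,C,D}"
  shows "facet3 F (convex hull {A,B,C,D}) \<longleftrightarrow>
     F = convex hull {B,C,D} \<or> F = convex hull {A,C,D} \<or> F = convex hull {A,B,D} \<or> F = convex hull {A,B,C}"
    and "convex hull {B,C,D} \<noteq> convex hull {A,C,D}" "convex hull {B,C,D} \<noteq> convex hull {A,B,D}"
        "convex hull {B,C,D} \<noteq> convex hull {A,B,C}" "convex hull {A,C,D} \<noteq> convex hull {A,B,D}"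
        "convex hull {A,C,D} \<noteq> convex hull {A,B,C}" "convex hull {A,B,D} \<noteq> convex hull {A,B,C}"
proof -
  let ?S = "{A,B,C,D}"
  have c4: "card ?S = 4" using d by simp
  have r: "?S - {A} = {B,C,D}" "?S - {B} = {A,C,D}" "?S - {C} = {A,B,D}" "?S - {D} = {A,B,C}"
    using d by auto
  show "facet3 F (convex hull {A,B,C,D}) \<longleftrightarrow>
     F = convex hull {B,C,D} \<or> F = convex hull {A,C,D} \<or> F = convex hull {A,B,D} \<or> F = convex hull {A,B,C}"
    unfolding facet3_iff[OF i c4] using r by auto
  show "convex hull {B,C,D} \<noteq> convex hull {A,C,D}" using facet_distinct[OF i, of A B] r d by auto
  show "convex hull {B,C,D} \<noteq> convex hull {A,B,D}" using facet_distinct[OF i, of A C] r d by auto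
  show "convex hull {B,C,D} \<noteq> convex hull {A,B,C}" using facet_distinct[OF i, of A D] r d by auto
  show "convex hull {A,C,D} \<noteq> convex hull {A,B,D}" using facet_distinct[OF i, of B C] r d by auto
  show "convex hull {A,C,D} \<noteq> convex hull {A,B,C}" using facet_distinct[OF i, of B D] r d by auto
  show "convex hull {A,B,D} \<noteq> convex hull {A,B,C}" using facet_distinct[OF i, of C D] r d by auto
qed

lemma interior4:
  fixes A B C D :: "real^3"
  assumes d: "distinct [A,B,C,D]" and i: "\<not> affine_dependent {A,B,C,D}"
  shows "G \<in> interior (convex hull {A,B,C,D}) \<longleftrightarrow>
    (\<exists>lA lB lC lD. lA > 0 \<and> lB > 0 \<and> lC > 0 \<and> lD > 0 \<and> lA + lB + lC + lD = 1 \<and>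
       G = lA *\<^sub>R A + lB *\<^sub>R B + lC *\<^sub>R C + lD *\<^sub>R D)"
proof -
  have c4: "\<not> card {A,B,C,D} \<le> DIM(real^3)" using d by simp
  have s: "sum u {A,B,C,D} = u A + u B + u C + u D"
    "(\<Sum>x\<in>{A,B,C,D}. u x *\<^sub>R x) = u A *\<^sub>R A + u B *\<^sub>R B + u C *\<^sub>R C + u D *\<^sub>R D" for u :: "real^3 \<Rightarrow> real"
    using d by (simp_all add: algebra_simps)
  show ?thesis
    unfolding interior_convex_hull_explicit_minimal[OF i] if_not_P[OF c4] s
  proof safe
    fix u :: "real^3 \<Rightarrow> real" assume "\<forall>x\<in>{A,B,C,D}. 0 < u x" "u A + u B + u C + u D = 1"
    then show "\<exists>lA lB lC lD. lA > 0 \<and> lB > 0 \<and> lC > 0 \<and> lD > 0 \<and> lA + lB + lC + lD = 1 \<and>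
       u A *\<^sub>R A + u B *\<^sub>R B + u C *\<^sub>R C + u D *\<^sub>R D = lA *\<^sub>R A + lB *\<^sub>R B + lC *\<^sub>R C + lD *\<^sub>R D"
      by auto
  next
    fix lA lB lC lD :: real
    assume h: "lA > 0" "lB > 0" "lC > 0" "lD > 0" "lA + lB + lC + lD = 1"
    define u where "u = (\<lambda>x. if x = A then lA else if x = B then lB else if x = C then lC else lD)"
    have uv: "u A = lA" "u B = lB" "u C = lC" "u D = lD" using d by (auto simp: u_def)
    show "\<exists>u. (\<forall>x\<in>{A,B,C,D}. 0 < u x) \<and> u A + u B + u C + u D = 1 \<and>
          u A *\<^sub>R A + u B *\<^sub>R B + u C *\<^sub>R C + u D *\<^sub>R D = lA *\<^sub>R A + lB *\<^sub>R B + lC *\<^sub>R C + lD *\<^sub>R D"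
      by (rule exI[of _ u]) (use h uv in auto)
  qed
qed



lemma EQ4:
  fixes A B C D G :: "real^3"
  assumes d: "distinct [A,B,C,D]" and i: "\<not> affine_dependent {A,B,C,D}"
    and pos: "lA > 0" "lB > 0" "lC > 0" "lD > 0" and s1: "lA + lB + lC + lD = 1"
    and G: "G = lA *\<^sub>R A + lB *\<^sub>R B + lC *\<^sub>R C + lD *\<^sub>R D"
  shows "equilibrium_on (convex hull {A,B,C,D}) G (convex hull {B,C,D}) \<longleftrightarrow>
    (lB * aa C D B + lA * cq C D A B > 0 \<and> lC * aa B D C + lA * cq B D A C > 0 \<and> lD * aa B C D + lA * cq B C A D > 0)"
  and "equilibrium_on (convex hull {A,B,C,D}) G (convex hull {A,C,D}) \<longleftrightarrow>
    (lA * aa C D A + lB * cq C D B A > 0 \<and> lC * aa A D C + lB * cq A D B C > 0 \<and> lD * aa A C D + lB * cq A C B D > 0)"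
  and "equilibrium_on (convex hull {A,B,C,D}) G (convex hull {A,B,D}) \<longleftrightarrow>
    (lA * aa B D A + lC * cq B D C A > 0 \<and> lB * aa A D B + lC * cq A D C B > 0 \<and> lD * aa A B D + lC * cq A B C D > 0)"
  and "equilibrium_on (convex hull {A,B,C,D}) G (convex hull {A,B,C}) \<longleftrightarrow>
    (lA * aa B C A + lD * cq B C D A > 0 \<and> lB * aa A C B + lD * cq A C D B > 0 \<and> lC * aa A B C + lD * cq A B D C > 0)"
proof -
  show "equilibrium_on (convex hull {A,B,C,D}) G (convex hull {B,C,D}) \<longleftrightarrow>
    (lB * aa C D B + lA * cq C D A B > 0 \<and> lC * aa B D C + lA * cq B D A C > 0 \<and> lD * aa B C D + lA * cq B C A D > 0)"
    using EQ[OF d i pos s1 G] .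
  have e: "{B,A,C,D} = {A,B,C,D}" by auto
  have dd: "distinct [B,A,C,D]" using d by auto
  show "equilibrium_on (convex hull {A,B,C,D}) G (convex hull {A,C,D}) \<longleftrightarrow>
    (lA * aa C D A + lB * cq C D B A > 0 \<and> lC * aa A D C + lB * cq A D B C > 0 \<and> lD * aa A C D + lB * cq A C B D > 0)"
    using EQ[OF dd, of lB lA lC lD G] i pos s1 G unfolding e by (simp add: algebra_simps)
  have e: "{C,A,B,D} = {A,B,C,D}" by auto
  have dd: "distinct [C,A,B,D]" using d by auto
  show "equilibrium_on (convex hull {A,B,C,D}) G (convex hull {A,B,D}) \<longleftrightarrow>
    (lA * aa B D A + lC * cq B D C A > 0 \<and> lB * aa A D B + lC * cq A D C B > 0 \<and> lD * aa A B D + lC * cq A B C D > 0)"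
    using EQ[OF dd, of lC lA lB lD G] i pos s1 G unfolding e by (simp add: algebra_simps)
  have e: "{D,A,B,C} = {A,B,C,D}" by auto
  have dd: "distinct [D,A,B,C]" using d by auto
  show "equilibrium_on (convex hull {A,B,C,D}) G (convex hull {A,B,C}) \<longleftrightarrow>
    (lA * aa B C A + lD * cq B C D A > 0 \<and> lB * aa A C B + lD * cq A C D B > 0 \<and> lC * aa A B C + lD * cq A B D C > 0)"
    using EQ[OF dd, of lD lA lB lC G] i pos s1 G unfolding e by (simp add: algebra_simps)
qed

lemma ex1_4:
  assumes "a \<noteq> b" "a \<noteq> c" "a \<noteq> d" "b \<noteq> c" "b \<noteq> d" "c \<noteq> d"
  shows "(\<exists>!x. (x = a \<or> x = b \<or> x = c \<or> x = d) \<and> Q x) \<longleftrightarrow>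
    (Q a \<and> \<not>Q b \<and> \<not>Q c \<and> \<not>Q d) \<or> (\<not>Q a \<and> Q b \<and> \<not>Q c \<and> \<not>Q d) \<or>
    (\<not>Q a \<and> \<not>Q b \<and> Q c \<and> \<not>Q d) \<or> (\<not>Q a \<and> \<not>Q b \<and> \<not>Q c \<and> Q d)"
proof
  assume "\<exists>!x. (x = a \<or> x = b \<or> x = c \<or> x = d) \<and> Q x"
  then obtain x where x: "(x = a \<or> x = b \<or> x = c \<or> x = d) \<and> Q x"
    and u: "\<And>y. (y = a \<or> y = b \<or> y = c \<or> y = d) \<and> Q y \<Longrightarrow> y = x" by blast
  show "(Q a \<and> \<not>Q b \<and> \<not>Q c \<and> \<not>Q d) \<or> (\<not>Q a \<and> Q b \<and> \<not>Q c \<and> \<not>Q d) \<or>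
    (\<not>Q a \<and> \<not>Q b \<and> Q c \<and> \<not>Q d) \<or> (\<not>Q a \<and> \<not>Q b \<and> \<not>Q c \<and> Q d)"
    using x u[of a] u[of b] u[of c] u[of d] assms by metis
next
  assume "(Q a \<and> \<not>Q b \<and> \<not>Q c \<and> \<not>Q d) \<or> (\<not>Q a \<and> Q b \<and> \<not>Q c \<and> \<not>Q d) \<or>
    (\<not>Q a \<and> \<not>Q b \<and> Q c \<and> \<not>Q d) \<or> (\<not>Q a \<and> \<not>Q b \<and> \<not>Q c \<and> Q d)"
  then show "\<exists>!x. (x = a \<or> x = b \<or> x = c \<or> x = d) \<and> Q x" by blast
qed

lemma MONO:
  fixes A B C D G :: "real^3"
  assumes d: "distinct [A,B,C,D]" and i: "\<not> affine_dependent {A,B,C,D}"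
  shows "monostable (convex hull {A,B,C,D}) G \<longleftrightarrow>
    (let EA = equilibrium_on (convex hull {A,B,C,D}) G (convex hull {B,C,D}); EB = equilibrium_on (convex hull {A,B,C,D}) G (convex hull {A,C,D});
         EC = equilibrium_on (convex hull {A,B,C,D}) G (convex hull {A,B,D}); ED = equilibrium_on (convex hull {A,B,C,D}) G (convex hull {A,B,C}) in
     (EA \<and> \<not>EB \<and> \<not>EC \<and> \<not>ED) \<or> (\<not>EA \<and> EB \<and> \<not>EC \<and> \<not>ED) \<or> (\<not>EA \<and> \<not>EB \<and> EC \<and> \<not>ED) \<or> (\<not>EA \<and> \<not>EB \<and> \<not>EC \<and> ED))"
proof -
  note f = facets4[OF d i]
  show ?thesis
    unfolding monostable_def stable_equilibrium_on_def f(1) Let_def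
    by (rule ex1_4[OF f(2-7)])
qed

lemma stable_iff:
  fixes A B C D G :: "real^3"
  assumes d: "distinct [A,B,C,D]" and i: "\<not> affine_dependent {A,B,C,D}"
  shows "F = convex hull {B,C,D} \<or> F = convex hull {A,C,D} \<or> F = convex hull {A,B,D} \<or> F = convex hull {A,B,C} \<Longrightarrow>
     stable_equilibrium_on (convex hull {A,B,C,D}) G F \<longleftrightarrow> equilibrium_on (convex hull {A,B,C,D}) G F"
  unfolding stable_equilibrium_on_def facets4(1)[OF d i] by blast



lemma gg_p1: "gg Y Z X = gg Y X Z" by (rule gg_sym1)
lemma gg_p4: "gg Y Z X = gg X Y Z" by (metis gg_sym1 gg_sym2)

lemma FAILP:
  assumes "distinct [A,B,C,D]" "\<not> affine_dependent {A,B,C,D}" "{W,X,Y,Z} = {A,B,C,D}" "distinct [W,X,Y,Z]"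
    "lW > 0" "lX > 0" "\<not> (lX * aa Y Z X + lW * cq Y Z W X > 0)"
  shows "cq Y Z W X < 0 \<and> lX^2 / gg Y Z W < lW^2 / gg Y Z X"
  using FAIL[of W X Y Z lW lX] assms by simp

lemma TRIP:
  assumes "distinct [A,B,C,D]" "\<not> affine_dependent {A,B,C,D}" "{P,X,Y,Z} = {A,B,C,D}" "distinct [P,X,Y,Z]"
  shows "\<not> (cq Y Z P X < 0 \<and> cq X Z P Y < 0 \<and> cq X Y P Z < 0)"
  using TRI[of P X Y Z] assms by simp

lemma path_witness:
  assumes "{a,b,c,d} = {A,B,C,D}" "distinct [a,b,c,d]"
    "cq a b c d < 0" "cq b c a d < 0" "cq c d a b < 0"
  shows "has_obtuse_path A B C D"
  unfolding has_obtuse_path_def dihedral_cq using assms by blast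

lemma mono_path:
  fixes A B C D G :: "real^3"
  assumes d: "distinct [A,B,C,D]" and i: "\<not> affine_dependent {A,B,C,D}"
    and Gi: "G \<in> interior (convex hull {A,B,C,D})" and m: "monostable (convex hull {A,B,C,D}) G"
  shows "has_obtuse_path A B C D"
proof -
  obtain lA lB lC lD where pos: "lA > 0" "lB > 0" "lC > 0" "lD > 0" and s1: "lA + lB + lC + lD = 1"
    and G: "G = lA *\<^sub>R A + lB *\<^sub>R B + lC *\<^sub>R C + lD *\<^sub>R D"
    using Gi interior4[OF d i] by blast
  note eq = EQ4[OF d i pos s1 G]
  define EA where "EA = equilibrium_on (convex hull {A,B,C,D}) G (convex hull {B,C,D})"
  define EB where "EB = equilibrium_on (convex hull {A,B,C,D}) G (convex hull {A,C,D})"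
  define EC where "EC = equilibrium_on (convex hull {A,B,C,D}) G (convex hull {A,B,D})"
  define ED where "ED = equilibrium_on (convex hull {A,B,C,D}) G (convex hull {A,B,C})"
  have one: "(\<not>EA \<and> \<not>EB \<and> \<not>EC) \<or> (\<not>EA \<and> \<not>EB \<and> \<not>ED) \<or> (\<not>EA \<and> \<not>EC \<and> \<not>ED) \<or> (\<not>EB \<and> \<not>EC \<and> \<not>ED)"
    using m unfolding MONO[OF d i] Let_def EA_def[symmetric] EB_def[symmetric] EC_def[symmetric] ED_def[symmetric]
    by blast
  define dA where "dA = lA^2 / gg B C D"
  define dB where "dB = lB^2 / gg A C D"
  define dC where "dC = lC^2 / gg A B D"
  define dD where "dD = lD^2 / gg A B C"
  define oAB where "oAB = (cq A B C D < 0)"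
  define oAC where "oAC = (cq A C B D < 0)"
  define oAD where "oAD = (cq A D B C < 0)"
  define oBC where "oBC = (cq B C A D < 0)"
  define oBD where "oBD = (cq B D A C < 0)"
  define oCD where "oCD = (cq C D A B < 0)"
  have g1: "gg C D A = gg A C D" "gg C D B = gg B C D" "gg B D A = gg A B D" "gg B D C = gg B C D"
     "gg B C A = gg A B C" "gg A D B = gg A B D" "gg A D C = gg A C D" "gg A C B = gg A B C"
    by (rule gg_p4 gg_p1)+
  have fA: "\<not> EA \<Longrightarrow> (oCD \<and> dB < dA) \<or> (oBD \<and> dC < dA) \<or> (oBC \<and> dD < dA)"
  proof -
    assume "\<not> EA"
    then have "\<not> (lB * aa C D B + lA * cq C D A B > 0) \<or> \<not> (lC * aa B D C + lA * cq B D A C > 0) \<or> \<not> (lD * aa B C D + lA * cq B C A D > 0)"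
      unfolding EA_def eq(1) by blast
    moreover have "{A,B,C,D} = {A,B,C,D}" "{A,C,B,D} = {A,B,C,D}" "{A,D,B,C} = {A,B,C,D}" by auto
    moreover have "distinct [A,B,C,D]" "distinct [A,C,B,D]" "distinct [A,D,B,C]" using d by auto
    ultimately show ?thesis
      using FAILP[OF d i, of A B C D lA lB] FAILP[OF d i, of A C B D lA lC] FAILP[OF d i, of A D B C lA lD] pos
      unfolding dA_def dB_def dC_def dD_def oCD_def oBD_def oBC_def g1 by blast
  qed
  have fB: "\<not> EB \<Longrightarrow> (oCD \<and> dA < dB) \<or> (oAD \<and> dC < dB) \<or> (oAC \<and> dD < dB)"
  proof -
    assume "\<not> EB"
    then have "\<not> (lA * aa C D A + lB * cq C D B A > 0) \<or> \<not> (lC * aa A D C + lB * cq A D B C > 0) \<or> \<not> (lD * aa A C D + lB * cq A C B D > 0)"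
      unfolding EB_def eq(2) by blast
    moreover have "{B,A,C,D} = {A,B,C,D}" "{B,C,A,D} = {A,B,C,D}" "{B,D,A,C} = {A,B,C,D}" by auto
    moreover have "distinct [B,A,C,D]" "distinct [B,C,A,D]" "distinct [B,D,A,C]" using d by auto
    ultimately show ?thesis
      using FAILP[OF d i, of B A C D lB lA] FAILP[OF d i, of B C A D lB lC] FAILP[OF d i, of B D A C lB lD] pos
      unfolding dA_def dB_def dC_def dD_def oCD_def oAD_def oAC_def g1 cq_comm[of C D B A] by blast
  qed
  have fC: "\<not> EC \<Longrightarrow> (oBD \<and> dA < dC) \<or> (oAD \<and> dB < dC) \<or> (oAB \<and> dD < dC)"
  proof -
    assume "\<not> EC"
    then have "\<not> (lA * aa B D A + lC * cq B D C A > 0) \<or> \<not> (lB * aa A D B + lC * cq A D C B > 0) \<or> \<not> (lD * aa A B D + lC * cq A B C D > 0)"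
      unfolding EC_def eq(3) by blast
    moreover have "{C,A,B,D} = {A,B,C,D}" "{C,B,A,D} = {A,B,C,D}" "{C,D,A,B} = {A,B,C,D}" by auto
    moreover have "distinct [C,A,B,D]" "distinct [C,B,A,D]" "distinct [C,D,A,B]" using d by auto
    ultimately show ?thesis
      using FAILP[OF d i, of C A B D lC lA] FAILP[OF d i, of C B A D lC lB] FAILP[OF d i, of C D A B lC lD] pos
      unfolding dA_def dB_def dC_def dD_def oBD_def oAD_def oAB_def g1 cq_comm[of B D C A] cq_comm[of A D C B] by blast
  qed
  have fD: "\<not> ED \<Longrightarrow> (oBC \<and> dA < dD) \<or> (oAC \<and> dB < dD) \<or> (oAB \<and> dC < dD)"
  proof -
    assume "\<not> ED"
    then have "\<not> (lA * aa B C A + lD * cq B C D A > 0) \<or> \<not> (lB * aa A C B + lD * cq A C D B > 0) \<or> \<not> (lC * aa A B C + lD * cq A B D C > 0)"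
      unfolding ED_def eq(4) by blast
    moreover have "{D,A,B,C} = {A,B,C,D}" "{D,B,A,C} = {A,B,C,D}" "{D,C,A,B} = {A,B,C,D}" by auto
    moreover have "distinct [D,A,B,C]" "distinct [D,B,A,C]" "distinct [D,C,A,B]" using d by auto
    ultimately show ?thesis
      using FAILP[OF d i, of D A B C lD lA] FAILP[OF d i, of D B A C lD lB] FAILP[OF d i, of D C A B lD lC] pos
      unfolding dA_def dB_def dC_def dD_def oBC_def oAC_def oAB_def g1 cq_comm[of B C D A] cq_comm[of A C D B] cq_comm[of A B D C] by blast
  qed
  have t1: "\<not> (oBC \<and> oBD \<and> oCD)"
  proof -
    have "{A,B,C,D} = {A,B,C,D}" "distinct [A,B,C,D]" using d by auto
    then show ?thesis using TRIP[OF d i, of A B C D] unfolding oBC_def oBD_def oCD_def by blast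
  qed
  have t2: "\<not> (oAC \<and> oAD \<and> oCD)"
  proof -
    have "{B,A,C,D} = {A,B,C,D}" "distinct [B,A,C,D]" using d by auto
    then show ?thesis using TRIP[OF d i, of B A C D] unfolding oAC_def oAD_def oCD_def cq_comm[of C D B A] by blast
  qed
  have t3: "\<not> (oAB \<and> oAD \<and> oBD)"
  proof -
    have "{C,A,B,D} = {A,B,C,D}" "distinct [C,A,B,D]" using d by auto
    then show ?thesis using TRIP[OF d i, of C A B D] unfolding oAB_def oAD_def oBD_def cq_comm[of B D C A] cq_comm[of A D C B] by blast
  qed
  have t4: "\<not> (oAB \<and> oAC \<and> oBC)"
  proof -
    have "{D,A,B,C} = {A,B,C,D}" "distinct [D,A,B,C]" using d by auto
    then show ?thesis using TRIP[OF d i, of D A B C] unfolding oAB_def oAC_def oBC_def cq_comm[of B C D A] cq_comm[of A C D B] cq_comm[of A B D C] by blast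
  qed
  have P: "(oAB \<and> oBC \<and> oCD) \<or> (oAB \<and> oBD \<and> oCD) \<or> (oAC \<and> oBC \<and> oBD) \<or> (oAC \<and> oCD \<and> oBD) \<or>
         (oAD \<and> oBD \<and> oBC) \<or> (oAD \<and> oCD \<and> oBC) \<or> (oAB \<and> oAC \<and> oCD) \<or> (oAB \<and> oAD \<and> oCD) \<or>
         (oAC \<and> oAB \<and> oBD) \<or> (oAC \<and> oAD \<and> oBD) \<or> (oAD \<and> oAB \<and> oBC) \<or> (oAD \<and> oAC \<and> oBC)"
    by (rule comb[OF fA fB fC fD t1 t2 t3 t4 one])
  have sets: "{A,B,C,D} = {A,B,C,D}" "{A,B,D,C} = {A,B,C,D}" "{A,C,B,D} = {A,B,C,D}" "{A,C,D,B} = {A,B,C,D}"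
    "{A,D,B,C} = {A,B,C,D}" "{A,D,C,B} = {A,B,C,D}" "{B,A,C,D} = {A,B,C,D}" "{B,A,D,C} = {A,B,C,D}"
    "{C,A,B,D} = {A,B,C,D}" "{C,A,D,B} = {A,B,C,D}" "{D,A,B,C} = {A,B,C,D}" "{D,A,C,B} = {A,B,C,D}" by auto
  have dists: "distinct [A,B,C,D]" "distinct [A,B,D,C]" "distinct [A,C,B,D]" "distinct [A,C,D,B]"
    "distinct [A,D,B,C]" "distinct [A,D,C,B]" "distinct [B,A,C,D]" "distinct [B,A,D,C]"
    "distinct [C,A,B,D]" "distinct [C,A,D,B]" "distinct [D,A,B,C]" "distinct [D,A,C,B]" using d by auto
  note pw = path_witness
  show ?thesis
    using P
  proof (elim disjE)
    assume "oAB \<and> oBC \<and> oCD" then show ?thesis using pw[OF sets(1) dists(1)]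
      unfolding oAB_def oBC_def oCD_def by (simp add: cq_comm cq_edge)
  next
    assume "oAB \<and> oBD \<and> oCD" then show ?thesis using pw[OF sets(2) dists(2)]
      unfolding oAB_def oBD_def oCD_def by (simp add: cq_comm cq_edge)
  next
    assume "oAC \<and> oBC \<and> oBD" then show ?thesis using pw[OF sets(3) dists(3)]
      unfolding oAC_def oBC_def oBD_def by (simp add: cq_comm cq_edge)
  next
    assume "oAC \<and> oCD \<and> oBD" then show ?thesis using pw[OF sets(4) dists(4)]
      unfolding oAC_def oCD_def oBD_def by (simp add: cq_comm cq_edge)
  next
    assume "oAD \<and> oBD \<and> oBC" then show ?thesis using pw[OF sets(5) dists(5)]
      unfolding oAD_def oBD_def oBC_def by (simp add: cq_comm cq_edge)
  next
    assume "oAD \<and> oCD \<and> oBC" then show ?thesis using pw[OF sets(6) dists(6)]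
      unfolding oAD_def oCD_def oBC_def by (simp add: cq_comm cq_edge)
  next
    assume "oAB \<and> oAC \<and> oCD" then show ?thesis using pw[OF sets(7) dists(7)]
      unfolding oAB_def oAC_def oCD_def by (simp add: cq_comm cq_edge)
  next
    assume "oAB \<and> oAD \<and> oCD" then show ?thesis using pw[OF sets(8) dists(8)]
      unfolding oAB_def oAD_def oCD_def by (simp add: cq_comm cq_edge)
  next
    assume "oAC \<and> oAB \<and> oBD" then show ?thesis using pw[OF sets(9) dists(9)]
      unfolding oAC_def oAB_def oBD_def by (simp add: cq_comm cq_edge)
  next
    assume "oAC \<and> oAD \<and> oBD" then show ?thesis using pw[OF sets(10) dists(10)]
      unfolding oAC_def oAD_def oBD_def by (simp add: cq_comm cq_edge)
  next
    assume "oAD \<and> oAB \<and> oBC" then show ?thesis using pw[OF sets(11) dists(11)]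
      unfolding oAD_def oAB_def oBC_def by (simp add: cq_comm cq_edge)
  next
    assume "oAD \<and> oAC \<and> oBC" then show ?thesis using pw[OF sets(12) dists(12)]
      unfolding oAD_def oAC_def oBC_def by (simp add: cq_comm cq_edge)
  qed
qed



lemma AAP:
  assumes "distinct [A,B,C,D]" "\<not> affine_dependent {A,B,C,D}" "{W,X,Y,Z} = {A,B,C,D}" "distinct [W,X,Y,Z]"
  shows "aa Y Z W > 0"
  using aa_pos[of W X Y Z] assms by simp

lemma SC:
  fixes S x y \<alpha> \<beta> :: real
  assumes "S > 0"
  shows "(x / S) * \<alpha> + (y / S) * \<beta> > 0 \<longleftrightarrow> x * \<alpha> + y * \<beta> > 0"
proof -
  have "(x / S) * \<alpha> + (y / S) * \<beta> = (x * \<alpha> + y * \<beta>) / S" by (simp add: add_divide_distrib)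
  then show ?thesis using assms by (simp add: zero_less_divide_iff)
qed

lemma L1:
  fixes M a k :: real
  assumes "k > 0" "M \<ge> a / k"
  shows "a \<le> M * k"
  using assms by (simp add: divide_le_eq)

lemma L2:
  fixes M a c :: real
  assumes "a > 0" "M > \<bar>c\<bar> / a"
  shows "M * a + c > 0"
proof -
  have "M * a > \<bar>c\<bar>" using assms by (simp add: divide_less_eq)
  then show ?thesis by linarith
qed

lemma CONS:
  fixes A B C D :: "real^3"
  assumes d: "distinct [A,B,C,D]" and i: "\<not> affine_dependent {A,B,C,D}"
    and h1: "cq A B C D < 0" and h2: "cq B C A D < 0" and h3: "cq C D A B < 0"
  shows "\<exists>G\<in>interior (convex hull {A,B,C,D}). monostable (convex hull {A,B,C,D}) G \<and>
            stable_equilibrium_on (convex hull {A,B,C,D}) G (convex hull {A,C,D})"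
    and "\<exists>G\<in>interior (convex hull {A,B,C,D}). monostable (convex hull {A,B,C,D}) G \<and>
            stable_equilibrium_on (convex hull {A,B,C,D}) G (convex hull {B,C,D})"
proof -
  define k1 where "k1 = - cq A B C D"
  define k2 where "k2 = - cq B C A D"
  define k3 where "k3 = - cq C D A B"
  have k: "k1 > 0" "k2 > 0" "k3 > 0" using h1 h2 h3 unfolding k1_def k2_def k3_def by auto
  have ap: "aa A B D > 0" "aa B C A > 0" "aa C D B > 0" "aa C D A > 0" "aa A D C > 0" "aa A C D > 0"
    "aa B D C > 0" "aa B C D > 0"
  proof -
    have "{D,C,A,B} = {A,B,C,D}" "distinct [D,C,A,B]" using d by auto
    then show "aa A B D > 0" using AAP[OF d i] by blast
    have "{A,D,B,C} = {A,B,C,D}" "distinct [A,D,B,C]" using d by auto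
    then show "aa B C A > 0" using AAP[OF d i] by blast
    have "{B,A,C,D} = {A,B,C,D}" "distinct [B,A,C,D]" using d by auto
    then show "aa C D B > 0" using AAP[OF d i] by blast
    have "{A,B,C,D} = {A,B,C,D}" "distinct [A,B,C,D]" using d by auto
    then show "aa C D A > 0" using AAP[OF d i] by blast
    have "{C,B,A,D} = {A,B,C,D}" "distinct [C,B,A,D]" using d by auto
    then show "aa A D C > 0" using AAP[OF d i] by blast
    have "{D,B,A,C} = {A,B,C,D}" "distinct [D,B,A,C]" using d by auto
    then show "aa A C D > 0" using AAP[OF d i] by blast
    have "{C,A,B,D} = {A,B,C,D}" "distinct [C,A,B,D]" using d by auto
    then show "aa B D C > 0" using AAP[OF d i] by blast
    have "{D,A,B,C} = {A,B,C,D}" "distinct [D,A,B,C]" using d by auto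
    then show "aa B C D > 0" using AAP[OF d i] by blast
  qed
  define r1 where "r1 = aa A B D / k1"
  define r2 where "r2 = aa B C A / k2"
  define r3 where "r3 = aa C D B / k3"
  define r4 where "r4 = aa C D A / k3"
  define s1 where "s1 = \<bar>cq C D B A\<bar> / aa C D A"
  define s2 where "s2 = \<bar>cq A D B C\<bar> / aa A D C"
  define s3 where "s3 = \<bar>cq A C B D\<bar> / aa A C D"
  define s4 where "s4 = \<bar>cq C D A B\<bar> / aa C D B"
  define s5 where "s5 = \<bar>cq B D A C\<bar> / aa B D C"
  define s6 where "s6 = \<bar>cq B C A D\<bar> / aa B C D"
  have nn: "r1 \<ge> 0" "r2 \<ge> 0" "r3 \<ge> 0" "r4 \<ge> 0" "s1 \<ge> 0" "s2 \<ge> 0" "s3 \<ge> 0" "s4 \<ge> 0" "s5 \<ge> 0" "s6 \<ge> 0"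
    unfolding r1_def r2_def r3_def r4_def s1_def s2_def s3_def s4_def s5_def s6_def
    using k ap by auto
  define M where "M = 1 + r1 + r2 + r3 + r4 + s1 + s2 + s3 + s4 + s5 + s6"
  have M1: "M \<ge> 1" unfolding M_def using nn by linarith
  have Mr: "M \<ge> r1" "M \<ge> r2" "M \<ge> r3" "M \<ge> r4" unfolding M_def using nn by linarith+
  have Ms: "M > s1" "M > s2" "M > s3" "M > s4" "M > s5" "M > s6" unfolding M_def using nn by linarith+
  have M2a: "M^2 \<ge> M"
  proof -
    have "M * 1 \<le> M * M" using M1 by (intro mult_left_mono) auto
    then show ?thesis by (simp add: power2_eq_square)
  qed
  have M2b: "M^3 \<ge> M"
  proof -
    have "M * 1 \<le> M * M^2" using M1 M2a by (intro mult_left_mono) auto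
    then show ?thesis by (simp add: power3_eq_cube power2_eq_square)
  qed
  note M2 = M2a M2b
  have Mp: "M > 0" using M1 by simp
  have c_comm: "cq C D B A = cq C D A B" "cq B C D A = cq B C A D" by (simp_all add: cq_comm)
  have f_r1: "aa A B D \<le> M * k1" using L1[OF k(1)] Mr(1) unfolding r1_def .
  have f_r2: "aa B C A \<le> M * k2" using L1[OF k(2)] Mr(2) unfolding r2_def .
  have f_r3: "aa C D B \<le> M * k3" using L1[OF k(3)] Mr(3) unfolding r3_def .
  have f_r4: "aa C D A \<le> M * k3" using L1[OF k(3)] Mr(4) unfolding r4_def .
  have Mge: "\<And>N. N \<ge> M \<Longrightarrow> N > s1 \<and> N > s2 \<and> N > s3 \<and> N > s4 \<and> N > s5 \<and> N > s6" using Ms by auto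
  have assemble: "\<exists>G\<in>interior (convex hull {A,B,C,D}). monostable (convex hull {A,B,C,D}) G \<and>
            stable_equilibrium_on (convex hull {A,B,C,D}) G F"
    if mpos: "mA > 0" "mB > 0" "mC > 0" "mD > 0"
      and Fc: "F = convex hull {B,C,D} \<or> F = convex hull {A,C,D} \<or> F = convex hull {A,B,D} \<or> F = convex hull {A,B,C}"
      and key: "\<And>lA lB lC lD G. lA > 0 \<Longrightarrow> lB > 0 \<Longrightarrow> lC > 0 \<Longrightarrow> lD > 0 \<Longrightarrow> lA + lB + lC + lD = 1 \<Longrightarrow>
           G = lA *\<^sub>R A + lB *\<^sub>R B + lC *\<^sub>R C + lD *\<^sub>R D \<Longrightarrow>
           lA = mA / (mA + mB + mC + mD) \<Longrightarrow> lB = mB / (mA + mB + mC + mD) \<Longrightarrow>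
           lC = mC / (mA + mB + mC + mD) \<Longrightarrow> lD = mD / (mA + mB + mC + mD) \<Longrightarrow>
           monostable (convex hull {A,B,C,D}) G \<and> equilibrium_on (convex hull {A,B,C,D}) G F"
    for mA mB mC mD F
  proof -
    define S where "S = mA + mB + mC + mD"
    have Sp: "S > 0" unfolding S_def using mpos by simp
    define G where "G = (mA / S) *\<^sub>R A + (mB / S) *\<^sub>R B + (mC / S) *\<^sub>R C + (mD / S) *\<^sub>R D"
    have lp: "mA / S > 0" "mB / S > 0" "mC / S > 0" "mD / S > 0" using mpos Sp by auto
    have ls: "mA / S + mB / S + mC / S + mD / S = 1" using Sp unfolding S_def by (simp add: add_divide_distrib[symmetric])
    have GI: "G \<in> interior (convex hull {A,B,C,D})"
      unfolding interior4[OF d i] G_def using lp ls by blast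
    have "monostable (convex hull {A,B,C,D}) G \<and> equilibrium_on (convex hull {A,B,C,D}) G F"
      using key[OF lp ls G_def] unfolding S_def by blast
    then show ?thesis using GI stable_iff[OF d i Fc] by blast
  qed
  show "\<exists>G\<in>interior (convex hull {A,B,C,D}). monostable (convex hull {A,B,C,D}) G \<and>
            stable_equilibrium_on (convex hull {A,B,C,D}) G (convex hull {A,C,D})"
  proof (rule assemble[of M 1 "M^3" "M^2"])
    show "M > 0" "(1::real) > 0" "M^3 > 0" "M^2 > 0" using Mp by auto
    show "convex hull {A,C,D} = convex hull {B,C,D} \<or> convex hull {A,C,D} = convex hull {A,C,D} \<or>
          convex hull {A,C,D} = convex hull {A,B,D} \<or> convex hull {A,C,D} = convex hull {A,B,C}" by simp
    fix lA lB lC lD G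
    assume lp: "lA > 0" "lB > 0" "lC > 0" "lD > 0" and ls: "lA + lB + lC + lD = 1"
      and G: "G = lA *\<^sub>R A + lB *\<^sub>R B + lC *\<^sub>R C + lD *\<^sub>R D"
      and lv: "lA = M / (M + 1 + M^3 + M^2)" "lB = 1 / (M + 1 + M^3 + M^2)" "lC = M^3 / (M + 1 + M^3 + M^2)"
        "lD = M^2 / (M + 1 + M^3 + M^2)"
    define S where "S = M + 1 + M^3 + M^2"
    have Sp: "S > 0" unfolding S_def using Mp by (simp add: add_pos_pos)
    note eq = EQ4[OF d i lp ls G]
    note lv' = lv[folded S_def]
    have EA: "\<not> equilibrium_on (convex hull {A,B,C,D}) G (convex hull {B,C,D})"
    proof -
      have "\<not> (1 * aa C D B + M * cq C D A B > 0)" using f_r3 unfolding k3_def by simp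
      then have "\<not> (lB * aa C D B + lA * cq C D A B > 0)" unfolding lv' SC[OF Sp] .
      then show ?thesis unfolding eq(1) by blast
    qed
    have EC: "\<not> equilibrium_on (convex hull {A,B,C,D}) G (convex hull {A,B,D})"
    proof -
      have "M^2 * aa A B D + M^3 * cq A B C D = M^2 * (aa A B D - M * k1)"
        unfolding k1_def by (simp add: power2_eq_square power3_eq_cube algebra_simps)
      also have "\<dots> \<le> 0" using f_r1 by (simp add: mult_nonneg_nonpos)
      finally have "\<not> (M^2 * aa A B D + M^3 * cq A B C D > 0)" by simp
      then have "\<not> (lD * aa A B D + lC * cq A B C D > 0)" unfolding lv' SC[OF Sp] .
      then show ?thesis unfolding eq(3) by blast
    qed
    have ED: "\<not> equilibrium_on (convex hull {A,B,C,D}) G (convex hull {A,B,C})"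
    proof -
      have "M * aa B C A + M^2 * cq B C D A = M * (aa B C A - M * k2)"
        unfolding k2_def c_comm by (simp add: power2_eq_square algebra_simps)
      also have "\<dots> \<le> 0" using f_r2 Mp by (simp add: mult_nonneg_nonpos)
      finally have "\<not> (M * aa B C A + M^2 * cq B C D A > 0)" by simp
      then have "\<not> (lA * aa B C A + lD * cq B C D A > 0)" unfolding lv' SC[OF Sp] .
      then show ?thesis unfolding eq(4) by blast
    qed
    have EB: "equilibrium_on (convex hull {A,B,C,D}) G (convex hull {A,C,D})"
    proof -
      have 1: "M * aa C D A + 1 * cq C D B A > 0" using L2[OF ap(4)] Ms(1) unfolding s1_def by simp
      have 2: "M^3 * aa A D C + 1 * cq A D B C > 0" using L2[OF ap(5)] Mge[OF M2(2)] unfolding s2_def by simp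
      have 3: "M^2 * aa A C D + 1 * cq A C B D > 0" using L2[OF ap(6)] Mge[OF M2(1)] unfolding s3_def by simp
      show ?thesis unfolding eq(2) lv' SC[OF Sp] using 1 2 3 by simp
    qed
    show "monostable (convex hull {A,B,C,D}) G \<and> equilibrium_on (convex hull {A,B,C,D}) G (convex hull {A,C,D})"
      unfolding MONO[OF d i] Let_def using EA EB EC ED by blast
  qed
  show "\<exists>G\<in>interior (convex hull {A,B,C,D}). monostable (convex hull {A,B,C,D}) G \<and>
            stable_equilibrium_on (convex hull {A,B,C,D}) G (convex hull {B,C,D})"
  proof (rule assemble[of 1 M "M^2" M])
    show "(1::real) > 0" "M > 0" "M^2 > 0" "M > 0" using Mp by auto
    show "convex hull {B,C,D} = convex hull {B,C,D} \<or> convex hull {B,C,D} = convex hull {A,C,D} \<or>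
          convex hull {B,C,D} = convex hull {A,B,D} \<or> convex hull {B,C,D} = convex hull {A,B,C}" by simp
    fix lA lB lC lD G
    assume lp: "lA > 0" "lB > 0" "lC > 0" "lD > 0" and ls: "lA + lB + lC + lD = 1"
      and G: "G = lA *\<^sub>R A + lB *\<^sub>R B + lC *\<^sub>R C + lD *\<^sub>R D"
      and lv: "lA = 1 / (1 + M + M^2 + M)" "lB = M / (1 + M + M^2 + M)" "lC = M^2 / (1 + M + M^2 + M)"
        "lD = M / (1 + M + M^2 + M)"
    define S where "S = 1 + M + M^2 + M"
    have Sp: "S > 0" unfolding S_def using Mp by (simp add: add_pos_pos)
    note eq = EQ4[OF d i lp ls G]
    note lv' = lv[folded S_def]
    have EB: "\<not> equilibrium_on (convex hull {A,B,C,D}) G (convex hull {A,C,D})"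
    proof -
      have "\<not> (1 * aa C D A + M * cq C D B A > 0)" using f_r4 unfolding k3_def c_comm by simp
      then have "\<not> (lA * aa C D A + lB * cq C D B A > 0)" unfolding lv' SC[OF Sp] .
      then show ?thesis unfolding eq(2) by blast
    qed
    have EC: "\<not> equilibrium_on (convex hull {A,B,C,D}) G (convex hull {A,B,D})"
    proof -
      have "M * aa A B D + M^2 * cq A B C D = M * (aa A B D - M * k1)"
        unfolding k1_def by (simp add: power2_eq_square algebra_simps)
      also have "\<dots> \<le> 0" using f_r1 Mp by (simp add: mult_nonneg_nonpos)
      finally have "\<not> (M * aa A B D + M^2 * cq A B C D > 0)" by simp
      then have "\<not> (lD * aa A B D + lC * cq A B C D > 0)" unfolding lv' SC[OF Sp] .
      then show ?thesis unfolding eq(3) by blast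
    qed
    have ED: "\<not> equilibrium_on (convex hull {A,B,C,D}) G (convex hull {A,B,C})"
    proof -
      have "\<not> (1 * aa B C A + M * cq B C D A > 0)" using f_r2 unfolding k2_def c_comm by simp
      then have "\<not> (lA * aa B C A + lD * cq B C D A > 0)" unfolding lv' SC[OF Sp] .
      then show ?thesis unfolding eq(4) by blast
    qed
    have EA: "equilibrium_on (convex hull {A,B,C,D}) G (convex hull {B,C,D})"
    proof -
      have 1: "M * aa C D B + 1 * cq C D A B > 0" using L2[OF ap(3)] Ms(4) unfolding s4_def by simp
      have 2: "M^2 * aa B D C + 1 * cq B D A C > 0" using L2[OF ap(7)] Mge[OF M2(1)] unfolding s5_def by simp
      have 3: "M * aa B C D + 1 * cq B C A D > 0" using L2[OF ap(8)] Ms(6) unfolding s6_def by simp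
      show ?thesis unfolding eq(1) lv' SC[OF Sp] using 1 2 3 by simp
    qed
    show "monostable (convex hull {A,B,C,D}) G \<and> equilibrium_on (convex hull {A,B,C,D}) G (convex hull {B,C,D})"
      unfolding MONO[OF d i] Let_def using EA EB EC ED by blast
  qed
qed



theorem theorem1p3:
  fixes A B C D :: "real^3"
  assumes "distinct [A, B, C, D]"
    and "\<not> affine_dependent {A, B, C, D}"
  defines "T \<equiv> convex hull {A, B, C, D}"
  shows "(has_obtuse_path A B C D
            \<longleftrightarrow> (\<exists>G \<in> interior T. monostable T G))
       \<and> ((\<exists>G \<in> interior T. monostable T G)
            \<longleftrightarrow> (\<forall>F. facet3 F T \<longrightarrow>
                   (\<exists>G\<^sub>F \<in> interior T. monostable T G\<^sub>F \<and> stable_equilibrium_on T G\<^sub>F F)))"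
proof -
  note d = assms(1) and i = assms(2)
  have P21: "has_obtuse_path A B C D" if "\<exists>G \<in> interior T. monostable T G"
    using that mono_path[OF d i] unfolding T_def by blast
  have P13: "\<forall>F. facet3 F T \<longrightarrow> (\<exists>G\<^sub>F \<in> interior T. monostable T G\<^sub>F \<and> stable_equilibrium_on T G\<^sub>F F)"
    if "has_obtuse_path A B C D"
  proof (intro allI impI)
    fix F assume fF: "facet3 F T"
    have "\<exists>a b c e. {a,b,c,e} = {A,B,C,D} \<and> distinct [a,b,c,e] \<and> cq a b c e < 0 \<and> cq b c a e < 0 \<and> cq c e a b < 0"
      using that unfolding has_obtuse_path_def dihedral_cq .
    then obtain a b c e where se: "{a,b,c,e} = {A,B,C,D}" and de: "distinct [a,b,c,e]"
      and o1: "cq a b c e < 0" and o2: "cq b c a e < 0" and o3: "cq c e a b < 0"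
      by (elim exE conjE)
    have ie: "\<not> affine_dependent {a,b,c,e}" using i se by simp
    have Te: "T = convex hull {a,b,c,e}" unfolding T_def se ..
    have cases: "F = convex hull {b,c,e} \<or> F = convex hull {a,c,e} \<or> F = convex hull {a,b,e} \<or> F = convex hull {a,b,c}"
      using fF unfolding Te facets4(1)[OF de ie] .
    have rev_s: "{e,c,b,a} = {a,b,c,e}" by auto
    have rev_d: "distinct [e,c,b,a]" using de by auto
    have rev_i: "\<not> affine_dependent {e,c,b,a}" using ie rev_s by simp
    have r1: "cq e c b a < 0" using o3 cq_edge[of e c b a] cq_comm[of c e b a] by simp
    have r2: "cq c b e a < 0" using o2 cq_edge[of c b e a] cq_comm[of b c e a] by simp
    have r3: "cq b a e c < 0" using o1 cq_edge[of b a e c] cq_comm[of a b e c] by simp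
    have f1: "convex hull {e,b,a} = convex hull {a,b,e}" "convex hull {c,b,a} = convex hull {a,b,c}"
      "convex hull {e,c,b,a} = T"
      unfolding Te by (simp_all add: insert_commute)
    note C1 = CONS[OF de ie o1 o2 o3, folded Te]
    note C2 = CONS[OF rev_d rev_i r1 r2 r3, unfolded f1]
    show "\<exists>G\<^sub>F \<in> interior T. monostable T G\<^sub>F \<and> stable_equilibrium_on T G\<^sub>F F"
      using cases
    proof (elim disjE)
      assume "F = convex hull {b,c,e}" then show ?thesis using C1(2) by simp
    next
      assume "F = convex hull {a,c,e}" then show ?thesis using C1(1) by simp
    next
      assume "F = convex hull {a,b,e}" then show ?thesis using C2(1) by simp
    next
      assume "F = convex hull {a,b,c}" then show ?thesis using C2(2) by simp
    qed
  qed
  have P32: "\<exists>G \<in> interior T. monostable T G"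
    if "\<forall>F. facet3 F T \<longrightarrow> (\<exists>G\<^sub>F \<in> interior T. monostable T G\<^sub>F \<and> stable_equilibrium_on T G\<^sub>F F)"
  proof -
    have "facet3 (convex hull {B,C,D}) T" unfolding T_def facets4(1)[OF d i] by simp
    then show ?thesis using that by blast
  qed
  show ?thesis
  proof (intro conjI iffI)
    assume "has_obtuse_path A B C D"
    then show "\<exists>G \<in> interior T. monostable T G" by (intro P32 P13)
  next
    assume "\<exists>G \<in> interior T. monostable T G"
    then show "has_obtuse_path A B C D" by (rule P21)
  next
    assume "\<exists>G \<in> interior T. monostable T G"
    then show "\<forall>F. facet3 F T \<longrightarrow> (\<exists>G\<^sub>F \<in> interior T. monostable T G\<^sub>F \<and> stable_equilibrium_on T G\<^sub>F F)"
      by (intro P13 P21)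
  next
    assume "\<forall>F. facet3 F T \<longrightarrow> (\<exists>G\<^sub>F \<in> interior T. monostable T G\<^sub>F \<and> stable_equilibrium_on T G\<^sub>F F)"
    then show "\<exists>G \<in> interior T. monostable T G" by (rule P32)
  qed
qed


end
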